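(* Let $r\geqslant1$. Ecalle's senary relation $$\mathrm{teru}( M)^r=\mathrm{push}\circ\mathrm{mantar}\circ\mathrm{teru}\circ\mathrm{mantar}( M)^r$$ for $M\in\mathrm{ARI}$ is equivalent to \begin{align*} &\underset{\sim}{u}(M)^{r+1}(x_1,\dots,x_{r+1})+\mathrm{coll}^{r+1}_{{2,3}}\circ \underset{\sim}{u}(M)^{r+1}(x_1,\dots,x_{r+1}) \\ &= \underset{\sim}{u}(M)^{r+1}(x_2,\dots,x_{r+1},x_1)+\mathrm{coll}^{r+1}_{{1,2}}\circ \underset{\sim}{u}(M)^{r+1}(x_1,\dots,x_{r+1}). \end{align*}
   Context: A mould is a sequence $M=(M^m(x_1,\dots,x_m))_{m\geqslant0}$ with $M^0(\emptyset)\in\mathbb Q$ and $M^m\in\mathbb Q[x_1,\dots,x_m]$; $\mathcal M(\mathcal F)$ denotes the set of moulds and $\mathrm{ARI}=\{M\in\mathcal M(\mathcal F)\mid M^0(\emptyset)=0\}$. The operators are: $\mathrm{swap}(M)^m(v_1,\dots,v_m)=M^m(v_m,v_{m-1}-v_m,\dots,v_1-v_2)$; $\mathrm{teru}(M)^m(u_1,\dots,u_m)=M^m(u_1,\dots,u_m)+\frac{1}{u_m}\{M^{m-1}(u_1,\dots,u_{m-2},u_{m-1}+u_m)-M^{m-1}(u_1,\dots,u_{m-1})\}$; (Ecalle's) $\mathrm{mantar}(M)^m(u_1,\dots,u_m)=(-1)^{m-1}M^m(u_m,\dots,u_1)$ and $\mathrm{push}(M)^m(u_1,\dots,u_m)=M^m(-u_1-\cdots-u_m,u_1,\dots,u_{m-1})$.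 The parallel translation $\underset{\sim}{t}:\mathcal M(\mathcal F)\to\mathcal M(\mathcal F)$ is $\underset{\sim}{t}(M)^m(x_1,\dots,x_m)=M^m(x_1,\dots,x_m)$ for $m=0,1$ and $=M^{m-1}(x_2-x_1,\dots,x_m-x_1)$ for $m\geqslant2$, and $\underset{\sim}{u}:=\underset{\sim}{t}\circ\mathrm{swap}$. For $m\geqslant2$, $1\leqslant i\leqslant m-1$, the collision map $\mathrm{coll}^m_{i,i+1}$ leaves all components of depth $j\neq m$ unchanged and sets $\mathrm{coll}^m_{i,i+1}(M)^m(x_1,\dots,x_m)=\frac{1}{x_i-x_{i+1}}\{M^{m-1}(x_1,\dots,x_i,x_{i+2},\dots,x_m)-M^{m-1}(x_1,\dots,x_{i-1},x_{i+1},x_{i+2},\dots,x_m)\}$. *)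

theory Defs
  imports Complex_Main
begin

(* Polynomial functions Q^N -> Q in the variables x 0, ..., x (n-1).
   Over the infinite field Q, polynomials in Q[x_1..x_n] correspond
   bijectively to such polynomial functions. *)
inductive polyfun :: "nat \<Rightarrow> ((nat \<Rightarrow> rat) \<Rightarrow> rat) \<Rightarrow> bool" for n :: nat where
  pf_const: "polyfun n (\<lambda>x. c)"
| pf_var: "i < n \<Longrightarrow> polyfun n (\<lambda>x. x i)"
| pf_add: "polyfun n f \<Longrightarrow> polyfun n g \<Longrightarrow> polyfun n (\<lambda>x. f x + g x)"
| pf_mult: "polyfun n f \<Longrightarrow> polyfun n g \<Longrightarrow> polyfun n (\<lambda>x. f x * g x)"

(* A mould M = (M^m)_m is encoded as a function on lists: M^m(x_1,...,x_m) = M [x_1,...,x_m].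
   It is a mould (element of M(F)) iff each depth-m component is a polynomial in m variables. *)
definition is_mould :: "(rat list \<Rightarrow> rat) \<Rightarrow> bool" where
  "is_mould M \<longleftrightarrow> (\<forall>m. polyfun m (\<lambda>x. M (map x [0..<m])))"

definition ARI :: "(rat list \<Rightarrow> rat) set" where
  "ARI = {M. is_mould M \<and> M [] = 0}"

(* swap(M)^m(v_1..v_m) = M^m(v_m, v_{m-1}-v_m, ..., v_1-v_2) *)
definition swap :: "(rat list \<Rightarrow> rat) \<Rightarrow> rat list \<Rightarrow> rat" where
  "swap M v = (let m = length v in
     M (map (\<lambda>i. if i = 0 then v ! (m - 1) else v ! (m - 1 - i) - v ! (m - i)) [0..<m]))"

definition teru :: "(rat list \<Rightarrow> rat) \<Rightarrow> rat list \<Rightarrow> rat" where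
  "teru M u = (let m = length u in
     if m < 2 then M u
     else M u + (M (take (m - 2) u @ [u ! (m - 2) + u ! (m - 1)]) - M (take (m - 1) u)) / u ! (m - 1))"

definition mantar :: "(rat list \<Rightarrow> rat) \<Rightarrow> rat list \<Rightarrow> rat" where
  "mantar M u = (-1) ^ (length u - 1) * M (rev u)"

definition push :: "(rat list \<Rightarrow> rat) \<Rightarrow> rat list \<Rightarrow> rat" where
  "push M u = (if u = [] then M [] else M ((- sum_list u) # butlast u))"

definition ptrans :: "(rat list \<Rightarrow> rat) \<Rightarrow> rat list \<Rightarrow> rat" where
  "ptrans M x = (if length x < 2 then M x else M (map (\<lambda>y. y - hd x) (tl x)))"

definition utrans :: "(rat list \<Rightarrow> rat) \<Rightarrow> rat list \<Rightarrow> rat" where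
  "utrans M = ptrans (swap M)"

(* remove the k-th entry (1-indexed) *)
definition del_at :: "nat \<Rightarrow> rat list \<Rightarrow> rat list" where
  "del_at k x = take (k - 1) x @ drop k x"

(* collision map coll^m_{i,i+1} (1-indexed i); the index i+1 is read cyclically modulo m,
   i.e. for i = m it is 1 (only needed for coll^2_{2,3}, the case r = 1). *)
definition coll :: "nat \<Rightarrow> nat \<Rightarrow> (rat list \<Rightarrow> rat) \<Rightarrow> rat list \<Rightarrow> rat" where
  "coll m i M x = (if length x = m then
     (let j = (if i + 1 \<le> m then i + 1 else 1) in
       (M (del_at j x) - M (del_at i x)) / (x ! (i - 1) - x ! (j - 1)))
   else M x)"

end

theory Submission
  imports Defs "HOL-Computational_Algebra.Polynomial"
begin

definition polyt :: "(rat \<Rightarrow> rat) \<Rightarrow> bool" where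
  "polyt g \<longleftrightarrow> (\<exists>p. \<forall>t. g t = poly p t)"

lemma polyt_const[intro]: "polyt (\<lambda>t. c)"
  unfolding polyt_def by (rule exI[of _ "[:c:]"]) simp

lemma polyt_id[intro]: "polyt (\<lambda>t. t)"
  unfolding polyt_def by (rule exI[of _ "[:0,1:]"]) simp

lemma polyt_add[intro]: "polyt f \<Longrightarrow> polyt g \<Longrightarrow> polyt (\<lambda>t. f t + g t)"
  unfolding polyt_def by (metis poly_add)

lemma polyt_mult[intro]: "polyt f \<Longrightarrow> polyt g \<Longrightarrow> polyt (\<lambda>t. f t * g t)"
  unfolding polyt_def by (metis poly_mult)

lemma polyt_diff[intro]: "polyt f \<Longrightarrow> polyt g \<Longrightarrow> polyt (\<lambda>t. f t - g t)"
  unfolding polyt_def by (metis poly_diff)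

lemma polyfun_polyt: "polyfun n f \<Longrightarrow> (\<And>i. i < n \<Longrightarrow> polyt (g i)) \<Longrightarrow> polyt (\<lambda>t. f (\<lambda>i. g i t))"
  by (induction rule: polyfun.induct) auto

definition polyl :: "(rat \<Rightarrow> rat list) \<Rightarrow> nat \<Rightarrow> bool" where
  "polyl L n \<longleftrightarrow> (\<forall>t. length (L t) = n) \<and> (\<forall>i<n. polyt (\<lambda>t. L t ! i))"

lemma mould_polyt:
  assumes "is_mould M" "polyl L m"
  shows "polyt (\<lambda>t. M (L t))"
proof -
  have "polyfun m (\<lambda>x. M (map x [0..<m]))" using assms(1) unfolding is_mould_def by blast
  from polyfun_polyt[OF this, of "\<lambda>i t. L t ! i"] assms(2)
  have "polyt (\<lambda>t. M (map (\<lambda>i. L t ! i) [0..<m]))" unfolding polyl_def by blast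
  moreover have "map (\<lambda>i. L t ! i) [0..<m] = L t" for t
    using assms(2) unfolding polyl_def by (metis map_nth)
  ultimately show ?thesis by simp
qed

lemma polyt_zero:
  assumes "polyt g" "finite B" "\<And>t. t \<notin> B \<Longrightarrow> g t = 0"
  shows "g t = 0"
proof -
  obtain p where p: "\<And>t. g t = poly p t" using assms(1) unfolding polyt_def by blast
  have "p = 0"
  proof (rule ccontr)
    assume "p \<noteq> 0"
    then have "finite {t. poly p t = 0}" by (rule poly_roots_finite)
    moreover have "UNIV - B \<subseteq> {t. poly p t = 0}" using assms(3) p by auto
    ultimately have "finite (UNIV - B)" by (rule finite_subset[rotated])
    with assms(2) have "finite (UNIV :: rat set)" by (metis Diff_subset_conv finite_UnI sup_commute Un_Diff_cancel2 finite_Un)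
    then show False by (simp add: infinite_UNIV_char_0)
  qed
  then show ?thesis using p by simp
qed

definition phi :: "rat list \<Rightarrow> rat list" where
  "phi y = (let v = map (\<lambda>z. z - hd y) (tl y); m = length v in
     map (\<lambda>i. if i = 0 then v ! (m - 1) else v ! (m - 1 - i) - v ! (m - i)) [0..<m])"

lemma U_phi: "2 \<le> length y \<Longrightarrow> utrans M y = M (phi y)"
  unfolding utrans_def ptrans_def swap_def phi_def Let_def by simp

lemma phi_len[simp]: "length (phi y) = length y - 1"
  unfolding phi_def Let_def by simp

lemma phi_nth:
  assumes "length y = Suc n" "i < n"
  shows "phi y ! i = (if i = 0 then y ! n - y ! 0 else y ! (n - i) - y ! (Suc n - i))"
proof (cases y)
  case Nil then show ?thesis using assms by simp
next
  case (Cons a v)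
  with assms have lv: "length v = n" by simp
  have "phi y ! i = (if i = 0 then (v ! (n - 1) - a) else (v ! (n - 1 - i) - a) - (v ! (n - i) - a))"
    unfolding phi_def Let_def Cons using lv assms(2) by simp
  moreover have "y ! n = v ! (n - 1)" "y ! (n - i) = v ! (n - 1 - i)" "y ! (Suc n - i) = v ! (n - i)"
    using Cons assms(2) by (auto simp: nth_Cons' Suc_diff_le)
  ultimately show ?thesis using Cons by simp
qed

lemma del_at_len[simp]: "1 \<le> k \<Longrightarrow> k \<le> length x \<Longrightarrow> length (del_at k x) = length x - 1"
  unfolding del_at_def by simp

lemma del_at_nth: "1 \<le> k \<Longrightarrow> k \<le> length x \<Longrightarrow> i < length x - 1 \<Longrightarrow>
   del_at k x ! i = (if i < k - 1 then x ! i else x ! Suc i)"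
  unfolding del_at_def by (auto simp: nth_append min_def)

lemma rot_nth: "length x = Suc n \<Longrightarrow> i < Suc n \<Longrightarrow>
   (tl x @ [hd x]) ! i = (if i < n then x ! Suc i else x ! 0)"
  by (cases x) (auto simp: nth_append)

lemma polyl_phi:
  assumes "polyl L (Suc n)"
  shows "polyl (\<lambda>t. phi (L t)) n"
  unfolding polyl_def
proof (intro conjI allI impI)
  fix t show "length (phi (L t)) = n" using assms unfolding polyl_def by simp
next
  fix i assume i: "i < n"
  have len: "length (L t) = Suc n" for t using assms unfolding polyl_def by blast
  have p: "polyt (\<lambda>t. L t ! j)" if "j < Suc n" for j using assms that unfolding polyl_def by blast
  have eq: "(\<lambda>t. phi (L t) ! i) = (\<lambda>t. if i = 0 then L t ! n - L t ! 0 else L t ! (n - i) - L t ! (Suc n - i))"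
    by (rule ext, rule phi_nth[OF len i])
  show "polyt (\<lambda>t. phi (L t) ! i)"
    unfolding eq using i by (cases "i = 0") (auto intro!: polyt_diff p)
qed

lemma polyl_del:
  assumes "polyl L (Suc n)" "1 \<le> k" "k \<le> Suc n"
  shows "polyl (\<lambda>t. del_at k (L t)) n"
  unfolding polyl_def
proof (intro conjI allI impI)
  have len: "length (L t) = Suc n" for t using assms unfolding polyl_def by blast
  fix t show "length (del_at k (L t)) = n" using assms len by simp
next
  fix i assume i: "i < n"
  have len: "length (L t) = Suc n" for t using assms unfolding polyl_def by blast
  have p: "polyt (\<lambda>t. L t ! j)" if "j < Suc n" for j using assms that unfolding polyl_def by blast
  have eq: "(\<lambda>t. del_at k (L t) ! i) = (\<lambda>t. if i < k - 1 then L t ! i else L t ! Suc i)"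
    by (rule ext, rule del_at_nth) (use assms len i in auto)
  show "polyt (\<lambda>t. del_at k (L t) ! i)"
    unfolding eq using i by (cases "i < k - 1") (auto intro!: p)
qed

lemma polyl_rot:
  assumes "polyl L (Suc n)"
  shows "polyl (\<lambda>t. tl (L t) @ [hd (L t)]) (Suc n)"
  unfolding polyl_def
proof (intro conjI allI impI)
  have len: "length (L t) = Suc n" for t using assms unfolding polyl_def by blast
  fix t show "length (tl (L t) @ [hd (L t)]) = Suc n" using len[of t] by simp
next
  fix i assume i: "i < Suc n"
  have len: "length (L t) = Suc n" for t using assms unfolding polyl_def by blast
  have p: "polyt (\<lambda>t. L t ! j)" if "j < Suc n" for j using assms that unfolding polyl_def by blast
  have eq: "(\<lambda>t. (tl (L t) @ [hd (L t)]) ! i) = (\<lambda>t. if i < n then L t ! Suc i else L t ! 0)"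
    by (rule ext, rule rot_nth[OF len i])
  show "polyt (\<lambda>t. (tl (L t) @ [hd (L t)]) ! i)"
    unfolding eq using i by (cases "i < n") (auto intro!: p)
qed


lemma tele: "(\<Sum>i=1..<r. f (r - i) - f (Suc r - i)) = (f 1 - f r :: rat)" if "1 \<le> r"
proof -
  have "(\<Sum>i=1..<r. f (r - i) - f (Suc r - i)) = (\<Sum>i=1..<r. f i - f (Suc i))"
    by (rule sum.reindex_bij_witness[where i="\<lambda>i. r - i" and j="\<lambda>i. r - i"]) (auto simp: Suc_diff_le)
  also have "\<dots> = - (\<Sum>i=1..<r. f (Suc i) - f i)" by (simp add: sum_negf[symmetric])
  also have "\<dots> = f 1 - f r" using sum_Suc_diff'[OF that, of f] by simp
  finally show ?thesis .
qed

lemma phi_sum: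
  assumes "length x = Suc r" "1 \<le> r"
  shows "sum_list (phi x) = x ! 1 - x ! 0"
proof -
  have "sum_list (phi x) = (\<Sum>i<r. phi x ! i)" using assms by (simp add: sum_list_sum_nth atLeast0LessThan)
  also have "\<dots> = (\<Sum>i<r. if i = 0 then x ! r - x ! 0 else x ! (r - i) - x ! (Suc r - i))"
    by (rule sum.cong) (auto simp: phi_nth[OF assms(1)])
  also have "\<dots> = (x ! r - x ! 0) + (\<Sum>i=1..<r. x ! (r - i) - x ! (Suc r - i))"
  proof -
    have "{..<r} = insert 0 {1..<r}" using assms by auto
    then show ?thesis by (simp add: sum.insert_if)
  qed
  also have "\<dots> = x ! 1 - x ! 0" using tele[OF assms(2), of "\<lambda>i. x ! i"] by simp
  finally show ?thesis .
qed


lemma phi_rot: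
  assumes "length x = Suc r" "2 \<le> r"
  shows "phi (tl x @ [hd x]) = (- sum_list (phi x)) # butlast (phi x)"
proof (rule nth_equalityI)
  have lr: "length (tl x @ [hd x]) = Suc r" using assms by (cases x) auto
  show "length (phi (tl x @ [hd x])) = length ((- sum_list (phi x)) # butlast (phi x))"
    using assms lr by simp
  fix i assume "i < length (phi (tl x @ [hd x]))"
  then have i: "i < r" using lr by simp
  show "phi (tl x @ [hd x]) ! i = ((- sum_list (phi x)) # butlast (phi x)) ! i"
  proof (cases i)
    case 0
    then show ?thesis using assms i by (simp add: phi_nth[OF lr] rot_nth[OF assms(1)] phi_sum)
  next
    case (Suc j)
    then have "Suc (r - Suc j) = r - j" using i by simp
    then show ?thesis using assms i Suc
      by (simp add: phi_nth[OF lr] rot_nth[OF assms(1)] phi_nth[OF assms(1)] nth_butlast Suc_diff_le)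
  qed
qed

lemma phi_del3:
  assumes "length x = Suc r" "2 \<le> r"
  shows "phi (del_at 3 x) = take (r - 2) (phi x) @ [phi x ! (r - 2) + phi x ! (r - 1)]"
proof (rule nth_equalityI)
  have lr: "length (del_at 3 x) = r" using assms by simp
  show "length (phi (del_at 3 x)) = length (take (r - 2) (phi x) @ [phi x ! (r - 2) + phi x ! (r - 1)])"
    using assms lr by simp
  fix i assume "i < length (phi (del_at 3 x))"
  then have i: "i < r - 1" using lr by simp
  obtain n where n: "r = Suc n" using assms by (cases r) auto
  have lr': "length (del_at 3 x) = Suc n" using lr n by simp
  show "phi (del_at 3 x) ! i = (take (r - 2) (phi x) @ [phi x ! (r - 2) + phi x ! (r - 1)]) ! i"
    using assms i n
    apply (auto simp: phi_nth[OF lr'] del_at_nth phi_nth[OF assms(1)] nth_append Suc_diff_le)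
     apply (subgoal_tac "n = Suc 0", simp, linarith)
    apply (subgoal_tac "n - i = Suc 0", simp, linarith)
    done
qed

lemma phi_del2:
  assumes "length x = Suc r" "2 \<le> r"
  shows "phi (del_at 2 x) = butlast (phi x)"
proof (rule nth_equalityI)
  have lr: "length (del_at 2 x) = r" using assms by simp
  show "length (phi (del_at 2 x)) = length (butlast (phi x))"
    using assms lr by simp
  fix i assume "i < length (phi (del_at 2 x))"
  then have i: "i < r - 1" using lr by simp
  obtain n where n: "r = Suc n" using assms by (cases r) auto
  have lr': "length (del_at 2 x) = Suc n" using lr n by simp
  show "phi (del_at 2 x) ! i = butlast (phi x) ! i"
    using assms i n
    by (auto simp: phi_nth[OF lr'] del_at_nth phi_nth[OF assms(1)] nth_butlast Suc_diff_le)
qed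

lemma phi_del1:
  assumes "length x = Suc r" "2 \<le> r"
  shows "phi (del_at 1 x) = (phi x ! 0 - sum_list (phi x)) # drop 1 (butlast (phi x))"
proof (rule nth_equalityI)
  have lr: "length (del_at 1 x) = r" using assms by simp
  show "length (phi (del_at 1 x)) = length ((phi x ! 0 - sum_list (phi x)) # drop 1 (butlast (phi x)))"
    using assms lr by simp
  fix i assume "i < length (phi (del_at 1 x))"
  then have i: "i < r - 1" using lr by simp
  obtain n where n: "r = Suc n" using assms by (cases r) auto
  have lr': "length (del_at 1 x) = Suc n" using lr n by simp
  show "phi (del_at 1 x) ! i = ((phi x ! 0 - sum_list (phi x)) # drop 1 (butlast (phi x))) ! i"
  proof (cases i)
    case 0
    have "phi (del_at 1 x) ! 0 = del_at 1 x ! n - del_at 1 x ! 0"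
      using phi_nth[OF lr', of 0] n assms by simp
    also have "\<dots> = x ! Suc n - x ! 1" using assms n by (simp add: del_at_nth)
    finally show ?thesis using 0 assms i n
      by (auto simp: phi_nth[OF assms(1)] phi_sum)
  next
    case (Suc j)
    have "phi (del_at 1 x) ! i = del_at 1 x ! (n - i) - del_at 1 x ! (Suc n - i)"
      using phi_nth[OF lr', of i] n i Suc by simp
    also have "\<dots> = x ! Suc (n - i) - x ! Suc (Suc n - i)" using assms n i Suc by (simp add: del_at_nth)
    moreover have "Suc (n - Suc j) = n - j" using Suc i n by simp
    ultimately show ?thesis using Suc assms i n
      by (auto simp: phi_nth[OF assms(1)] nth_butlast Suc_diff_le)
  qed
qed


lemma teru_exp:
  assumes "length u = Suc (Suc k)"
  shows "teru M u = M u + (M (take k u @ [u ! k + u ! Suc k]) - M (take (Suc k) u)) / u ! Suc k"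
  using assms by (simp add: teru_def)

lemma push_exp:
  assumes "length u = Suc (Suc k)"
  shows "push (mantar (teru (mantar M))) u = M ((- sum_list u) # butlast u)
     + (M ((u ! 0 - sum_list u) # drop 1 (butlast u)) - M (butlast u)) / sum_list u"
proof -
  define z where "z = (- sum_list u) # butlast u"
  define w where "w = rev z"
  have lz: "length z = Suc (Suc k)" "length w = Suc (Suc k)" using assms by (auto simp: z_def w_def)
  have "push (mantar (teru (mantar M))) u = mantar (teru (mantar M)) z"
    using assms by (auto simp: push_def z_def)
  also have "\<dots> = (-1) ^ Suc k * teru (mantar M) w" using lz by (simp add: mantar_def w_def)
  also have "teru (mantar M) w = mantar M w + (mantar M (take k w @ [w ! k + w ! Suc k]) - mantar M (take (Suc k) w)) / w ! Suc k"
    by (rule teru_exp[OF lz(2)])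
  also have "mantar M w = (-1) ^ Suc k * M z" using lz by (simp add: mantar_def w_def)
  also have "w ! Suc k = z ! 0" using lz by (simp add: w_def rev_nth)
  also have "w ! k = z ! 1" using lz by (simp add: w_def rev_nth)
  also have "take (Suc k) w = rev (drop 1 z)" using lz by (simp add: w_def rev_drop)
  also have "take k w = rev (drop 2 z)" using lz by (simp add: w_def rev_drop)
  also have "mantar M (rev (drop 2 z) @ [z ! 1 + z ! 0]) = (-1) ^ k * M ((z ! 1 + z ! 0) # drop 2 z)"
    using lz by (simp add: mantar_def)
  also have "mantar M (rev (drop 1 z)) = (-1) ^ k * M (drop 1 z)"
    using lz by (simp add: mantar_def)
  finally have "push (mantar (teru (mantar M))) u = M z - (M ((z ! 1 + z ! 0) # drop 2 z) - M (drop 1 z)) / z ! 0"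
    by (simp add: algebra_simps diff_divide_distrib)
  moreover have "z ! 0 = - sum_list u" "z ! 1 = u ! 0" "drop 2 z = drop 1 (butlast u)" "drop 1 z = butlast u"
    using assms by (auto simp: z_def nth_butlast)
  ultimately show ?thesis by (simp add: z_def algebra_simps diff_divide_distrib)
qed


lemma rhs_iff:
  assumes lx: "length x = Suc r" and r2: "2 \<le> r" and d01: "x ! 0 \<noteq> x ! 1" and d12: "x ! 1 \<noteq> x ! 2"
  shows "(utrans M x + coll (r + 1) 2 (utrans M) x = utrans M (tl x @ [hd x]) + coll (r + 1) 1 (utrans M) x)
     \<longleftrightarrow> teru M (phi x) = push (mantar (teru (mantar M))) (phi x)"
proof -
  obtain k where k: "r = Suc (Suc k)" using r2 by (metis add_2_eq_Suc le_Suc_ex)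
  define u where "u = phi x"
  have lu: "length u = Suc (Suc k)" using lx k by (simp add: u_def)
  have lrot: "length (tl x @ [hd x]) = Suc r" using lx by (cases x) auto
  have su: "sum_list u = x ! 1 - x ! 0" using phi_sum[OF lx] r2 by (simp add: u_def)
  have ul: "u ! Suc k = x ! 1 - x ! 2" using phi_nth[OF lx, of "Suc k"] k by (simp add: u_def numeral_2_eq_2)
  have c2: "coll (r + 1) 2 (utrans M) x = (utrans M (del_at 3 x) - utrans M (del_at 2 x)) / (x ! 1 - x ! 2)"
    using lx r2 by (simp add: coll_def numeral_2_eq_2 numeral_3_eq_3)
  have c1: "coll (r + 1) 1 (utrans M) x = (utrans M (del_at 2 x) - utrans M (del_at 1 x)) / (x ! 0 - x ! 1)"
    using lx r2 by (simp add: coll_def numeral_2_eq_2)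
  have U0: "utrans M x = M u" using lx r2 by (simp add: U_phi u_def)
  have U1: "utrans M (tl x @ [hd x]) = M ((- sum_list u) # butlast u)"
    using lrot r2 by (simp add: U_phi u_def phi_rot[OF lx r2])
  have U3: "utrans M (del_at 3 x) = M (take k u @ [u ! k + u ! Suc k])"
    using lx r2 k by (simp add: U_phi u_def phi_del3[OF lx r2])
  have U2: "utrans M (del_at 2 x) = M (butlast u)"
    using lx r2 k by (simp add: U_phi u_def phi_del2[OF lx r2])
  have U1': "utrans M (del_at 1 x) = M ((u ! 0 - sum_list u) # drop 1 (butlast u))"
  proof -
    have "utrans M (del_at 1 x) = M (phi (del_at 1 x))" by (rule U_phi) (use lx r2 in simp)
    then show ?thesis unfolding phi_del1[OF lx r2] u_def .
  qed
  have tb: "take (Suc k) u = butlast u" using lu by (simp add: butlast_conv_take)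
  have e: "(a - b) / (x ! 0 - x ! 1) = (b - a) / (x ! 1 - x ! 0)" for a b :: rat
    using d01 by (simp add: field_simps)
  show ?thesis
    unfolding c1 c2 U0 U1 U2 U3 U1' teru_exp[OF lu] push_exp[OF lu] tb su ul e u_def[symmetric]
    by simp
qed


definition psi :: "rat list \<Rightarrow> rat list" where
  "psi u = 0 # rev (map (\<lambda>k. sum_list (take (Suc k) u)) [0..<length u])"

lemma phi_psi:
  assumes "1 \<le> length u"
  shows "phi (psi u) = u"
proof (rule nth_equalityI)
  define r where "r = length u"
  have lp: "length (psi u) = Suc r" by (simp add: psi_def r_def)
  show "length (phi (psi u)) = length u" using lp r_def by simp
  fix i assume "i < length (phi (psi u))"
  then have i: "i < r" using lp by simp
  have pn: "psi u ! j = sum_list (take (Suc r - j) u)" if "1 \<le> j" "j \<le> r" for j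
    proof -
    have "[0..<length u] ! (length u - j) = length u - j" using that by (simp add: r_def del: upt_Suc)
    then show ?thesis using that by (simp add: psi_def r_def rev_nth nth_Cons' Suc_diff_le del: upt_Suc)
  qed
  have ts: "sum_list (take (Suc m) u) = sum_list (take m u) + u ! m" if "m < r" for m
    using that by (simp add: take_Suc_conv_app_nth r_def)
  show "phi (psi u) ! i = u ! i"
  proof (cases "i = 0")
    case True
    then show ?thesis using phi_nth[OF lp, of i] i pn[of r] ts[of 0] by (simp add: psi_def)
  next
    case False
    have "phi (psi u) ! i = psi u ! (r - i) - psi u ! (Suc r - i)" using phi_nth[OF lp, of i] i False by simp
    also have "\<dots> = sum_list (take (Suc i) u) - sum_list (take i u)"
      using pn[of "r - i"] pn[of "Suc r - i"] i False by (simp add: Suc_diff_le)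
    finally show ?thesis using ts[OF i] by simp
  qed
qed

lemma length_psi[simp]: "length (psi u) = Suc (length u)" by (simp add: psi_def)

definition Gf :: "(rat list \<Rightarrow> rat) \<Rightarrow> rat list \<Rightarrow> rat" where
  "Gf M x = (x ! 1 - x ! 2) * (x ! 0 - x ! 1) * (utrans M x - utrans M (tl x @ [hd x]))
     + (x ! 0 - x ! 1) * (utrans M (del_at 3 x) - utrans M (del_at 2 x))
     - (x ! 1 - x ! 2) * (utrans M (del_at 2 x) - utrans M (del_at 1 x))"

lemma rhs_Gf:
  assumes lx: "length x = Suc r" and r2: "2 \<le> r" and d01: "x ! 0 \<noteq> x ! 1" and d12: "x ! 1 \<noteq> x ! 2"
  shows "(utrans M x + coll (r + 1) 2 (utrans M) x = utrans M (tl x @ [hd x]) + coll (r + 1) 1 (utrans M) x)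
     \<longleftrightarrow> Gf M x = 0"
proof -
  have c2: "coll (r + 1) 2 (utrans M) x = (utrans M (del_at 3 x) - utrans M (del_at 2 x)) / (x ! 1 - x ! 2)"
    using lx r2 by (simp add: coll_def numeral_2_eq_2 numeral_3_eq_3)
  have c1: "coll (r + 1) 1 (utrans M) x = (utrans M (del_at 2 x) - utrans M (del_at 1 x)) / (x ! 0 - x ! 1)"
    using lx r2 by (simp add: coll_def numeral_2_eq_2)
  have n1: "x ! 1 - x ! 2 \<noteq> 0" and n0: "x ! 0 - x ! 1 \<noteq> 0" using d01 d12 by auto
  show ?thesis unfolding c1 c2 Gf_def using n1 n0
    by (simp add: field_simps)
qed

lemma Gf_polyt:
  assumes "is_mould M" "polyl L (Suc r)" "2 \<le> r"
  shows "polyt (\<lambda>t. Gf M (L t))"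
proof -
  have len: "length (L t) = Suc r" for t using assms(2) unfolding polyl_def by blast
  have p: "polyt (\<lambda>t. L t ! j)" if "j < Suc r" for j using assms(2) that unfolding polyl_def by blast
  have U: "polyt (\<lambda>t. utrans M (K t))" if "polyl K (Suc n)" "1 \<le> n" for K n
  proof -
    have lK: "length (K t) = Suc n" for t using that unfolding polyl_def by blast
    have "polyt (\<lambda>t. M (phi (K t)))" by (rule mould_polyt[OF assms(1) polyl_phi[OF that(1)]])
    moreover have "utrans M (K t) = M (phi (K t))" for t using lK[of t] that(2) by (simp add: U_phi)
    ultimately show ?thesis by simp
  qed
  obtain n where n: "r = Suc n" "1 \<le> n" using assms(3) by (cases r) auto
  have pd: "polyl (\<lambda>t. del_at k (L t)) (Suc n)" if "1 \<le> k" "k \<le> 3" for k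
    using polyl_del[OF assms(2), of k] that n assms(3) by simp
  have U0: "polyt (\<lambda>t. utrans M (L t))" using U[OF assms(2)] n by simp
  have U1: "polyt (\<lambda>t. utrans M (tl (L t) @ [hd (L t)]))" using U[OF polyl_rot[OF assms(2)]] n by simp
  have Ud: "polyt (\<lambda>t. utrans M (del_at k (L t)))" if "1 \<le> k" "k \<le> 3" for k
    using U[OF pd[OF that] n(2)] .
  have p0: "polyt (\<lambda>t. L t ! 0)" "polyt (\<lambda>t. L t ! 1)" "polyt (\<lambda>t. L t ! 2)" using p assms(3) by auto
  show ?thesis unfolding Gf_def
    by (intro polyt_diff polyt_add polyt_mult p0 U0 U1 Ud) auto
qed

lemma density:
  assumes M: "is_mould M" and lx: "length x = Suc r" and r2: "2 \<le> r"
    and H: "\<And>y. length y = Suc r \<Longrightarrow> distinct y \<Longrightarrow> Gf M y = 0"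
  shows "Gf M x = 0"
proof -
  define L where "L t = map (\<lambda>i. x ! i + t * of_nat i) [0..<Suc r]" for t
  have pl: "polyl L (Suc r)" unfolding polyl_def L_def by (auto intro!: polyt_add polyt_mult simp del: upt_Suc)
  define B where "B = (\<lambda>(i, j). (x ! i - x ! j) / (of_nat j - of_nat i)) ` ({0..r} \<times> {0..r})"
  have fB: "finite B" unfolding B_def by simp
  have "Gf M (L t) = 0" if "t \<notin> B" for t
  proof (rule H)
    show "length (L t) = Suc r" by (simp add: L_def)
    show "distinct (L t)"
    proof (rule ccontr)
      assume "\<not> distinct (L t)"
      then obtain i j where ij: "i < Suc r" "j < Suc r" "i \<noteq> j" "L t ! i = L t ! j"
        unfolding distinct_conv_nth by (auto simp: L_def simp del: upt_Suc)
      then have e: "x ! i + t * of_nat i = x ! j + t * of_nat j" by (simp add: L_def del: upt_Suc)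
      have "(of_nat j - of_nat i :: rat) \<noteq> 0" using ij(3) by simp
      moreover have "t * (of_nat j - of_nat i) = x ! i - x ! j" using e by (simp add: algebra_simps)
      ultimately have "t = (x ! i - x ! j) / (of_nat j - of_nat i)" by (simp add: eq_divide_eq)
      moreover have "(i, j) \<in> {0..r} \<times> {0..r}" using ij by auto
      ultimately have "t \<in> B" unfolding B_def by (auto intro: rev_image_eqI)
      with that show False by simp
    qed
  qed
  from polyt_zero[OF Gf_polyt[OF M pl r2] fB this, of 0]
  have "Gf M (L 0) = 0" .
  moreover have "L 0 = x" unfolding L_def using lx by (intro nth_equalityI) (simp_all del: upt_Suc)
  ultimately show ?thesis by simp
qed


lemma lhs1: "teru M [a] = M [a]" "push (mantar (teru (mantar M))) [a] = M [- a]"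
  by (simp_all add: teru_def push_def mantar_def)

lemma divswap: "(p - q) / (c - d) = (q - p) / (d - (c::rat))"
  by (metis minus_diff_eq minus_divide_divide)

lemma rhs1:
  "(utrans M [a, b] + coll (1 + 1) 2 (utrans M) [a, b] = utrans M (tl [a, b] @ [hd [a, b]]) + coll (1 + 1) 1 (utrans M) [a, b])
   \<longleftrightarrow> M [b - a] = M [a - b]"
proof -
  have c: "coll (1 + 1) 2 (utrans M) [a, b] = coll (1 + 1) 1 (utrans M) [a, b]"
    by (simp add: coll_def del_at_def utrans_def ptrans_def swap_def divswap[of "M [b]"])
  have "utrans M [a, b] = M [b - a]" "utrans M (tl [a, b] @ [hd [a, b]]) = M [a - b]"
    by (simp_all add: utrans_def ptrans_def swap_def)
  then show ?thesis using c by simp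
qed


theorem lemma4p1:
  fixes M :: "rat list \<Rightarrow> rat" and r :: nat
  assumes "1 \<le> r" and "M \<in> ARI"
  shows "(\<forall>u. length u = r \<and> u ! (r - 1) \<noteq> 0 \<and> sum_list u \<noteq> 0 \<longrightarrow>
            teru M u = push (mantar (teru (mantar M))) u)
     \<longleftrightarrow>
         (\<forall>x. length x = r + 1 \<and> distinct x \<longrightarrow>
            utrans M x + coll (r + 1) 2 (utrans M) x
              = utrans M (tl x @ [hd x]) + coll (r + 1) 1 (utrans M) x)"
proof (cases "r = 1")
  case True
  show ?thesis
  proof
    assume L: "\<forall>u. length u = r \<and> u ! (r - 1) \<noteq> 0 \<and> sum_list u \<noteq> 0 \<longrightarrow>
            teru M u = push (mantar (teru (mantar M))) u"
    show "\<forall>x. length x = r + 1 \<and> distinct x \<longrightarrow>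
            utrans M x + coll (r + 1) 2 (utrans M) x
              = utrans M (tl x @ [hd x]) + coll (r + 1) 1 (utrans M) x"
    proof (intro allI impI)
      fix x :: "rat list" assume x: "length x = r + 1 \<and> distinct x"
      define a where "a = x ! 0"
      define b where "b = x ! 1"
      have ab: "x = [a, b]" unfolding a_def b_def using x True
        by (cases x; cases "tl x") auto
      with x have "a \<noteq> b" by simp
      then have "M [b - a] = M [- (b - a)]" using L[rule_format, of "[b - a]"] True by (simp add: lhs1)
      then show "utrans M x + coll (r + 1) 2 (utrans M) x
              = utrans M (tl x @ [hd x]) + coll (r + 1) 1 (utrans M) x"
        unfolding ab True by (subst rhs1) simp
    qed
  next
    assume R: "\<forall>x. length x = r + 1 \<and> distinct x \<longrightarrow>
            utrans M x + coll (r + 1) 2 (utrans M) x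
              = utrans M (tl x @ [hd x]) + coll (r + 1) 1 (utrans M) x"
    show "\<forall>u. length u = r \<and> u ! (r - 1) \<noteq> 0 \<and> sum_list u \<noteq> 0 \<longrightarrow>
            teru M u = push (mantar (teru (mantar M))) u"
    proof (intro allI impI)
      fix u :: "rat list" assume u: "length u = r \<and> u ! (r - 1) \<noteq> 0 \<and> sum_list u \<noteq> 0"
      define a where "a = u ! 0"
      have a: "u = [a]" unfolding a_def using u True by (cases u) auto
      with u have "a \<noteq> 0" by simp
      then have "M [a - 0] = M [0 - a]" using R[rule_format, of "[0, a]"] True rhs1[of M 0 a] by simp
      then show "teru M u = push (mantar (teru (mantar M))) u" unfolding a lhs1 by simp
    qed
  qed
next
  case False
  with assms(1) have r2: "2 \<le> r" by simp
  have Mm: "is_mould M" using assms(2) by (simp add: ARI_def)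
  show ?thesis
  proof
    assume L: "\<forall>u. length u = r \<and> u ! (r - 1) \<noteq> 0 \<and> sum_list u \<noteq> 0 \<longrightarrow>
            teru M u = push (mantar (teru (mantar M))) u"
    show "\<forall>x. length x = r + 1 \<and> distinct x \<longrightarrow>
            utrans M x + coll (r + 1) 2 (utrans M) x
              = utrans M (tl x @ [hd x]) + coll (r + 1) 1 (utrans M) x"
    proof (intro allI impI)
      fix x :: "rat list" assume x: "length x = r + 1 \<and> distinct x"
      then have lx: "length x = Suc r" by simp
      have d01: "x ! 0 \<noteq> x ! 1" and d12: "x ! 1 \<noteq> x ! 2"
        using x r2 by (simp_all add: nth_eq_iff_index_eq)
      have s: "sum_list (phi x) = x ! 1 - x ! 0" using phi_sum[OF lx] r2 by simp
      have l: "phi x ! (r - 1) = x ! 1 - x ! 2"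
        using phi_nth[OF lx, of "r - 1"] r2 by (simp add: Suc_diff_le numeral_2_eq_2)
      have "teru M (phi x) = push (mantar (teru (mantar M))) (phi x)"
        using L[rule_format, of "phi x"] lx s l d01 d12 by simp
      then show "utrans M x + coll (r + 1) 2 (utrans M) x
              = utrans M (tl x @ [hd x]) + coll (r + 1) 1 (utrans M) x"
        using rhs_iff[OF lx r2 d01 d12] by simp
    qed
  next
    assume R: "\<forall>x. length x = r + 1 \<and> distinct x \<longrightarrow>
            utrans M x + coll (r + 1) 2 (utrans M) x
              = utrans M (tl x @ [hd x]) + coll (r + 1) 1 (utrans M) x"
    show "\<forall>u. length u = r \<and> u ! (r - 1) \<noteq> 0 \<and> sum_list u \<noteq> 0 \<longrightarrow>
            teru M u = push (mantar (teru (mantar M))) u"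
    proof (intro allI impI)
      fix u :: "rat list" assume u: "length u = r \<and> u ! (r - 1) \<noteq> 0 \<and> sum_list u \<noteq> 0"
      define x where "x = psi u"
      have lx: "length x = Suc r" using u by (simp add: x_def)
      have px: "phi x = u" using u r2 by (simp add: x_def phi_psi)
      have s: "sum_list (phi x) = x ! 1 - x ! 0" using phi_sum[OF lx] r2 by simp
      have l: "phi x ! (r - 1) = x ! 1 - x ! 2"
        using phi_nth[OF lx, of "r - 1"] r2 by (simp add: Suc_diff_le numeral_2_eq_2)
      have d01: "x ! 0 \<noteq> x ! 1" using s px u by auto
      have d12: "x ! 1 \<noteq> x ! 2" using l px u by auto
      have H: "Gf M y = 0" if "length y = Suc r" "distinct y" for y
      proof -
        have d: "y ! 0 \<noteq> y ! 1" "y ! 1 \<noteq> y ! 2" using that r2 by (simp_all add: nth_eq_iff_index_eq)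
        have "utrans M y + coll (r + 1) 2 (utrans M) y = utrans M (tl y @ [hd y]) + coll (r + 1) 1 (utrans M) y"
          using R that by simp
        then show ?thesis using rhs_Gf[OF that(1) r2 d, of M] by simp
      qed
      have "Gf M x = 0" by (rule density[OF Mm lx r2 H])
      then have "teru M (phi x) = push (mantar (teru (mantar M))) (phi x)"
        using rhs_Gf[OF lx r2 d01 d12, of M] rhs_iff[OF lx r2 d01 d12, of M] by simp
      then show "teru M u = push (mantar (teru (mantar M))) u" using px by simp
    qed
  qed
qed

end
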